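(* Let $\{a_i,b_i\}$, $i\in\mathbb N_+$, be pairwise distinct two-element subsets of $U$, and let $\mathcal D_1$ be the edge-independent unbounded probabilistic graph in which $E(a_i,b_i)$ and $E(b_i,a_i)$ have marginal probability $p_{a_i,b_i}=p_{b_i,a_i}=1/i^4$ for each $i\in\mathbb N_+$ and all other facts have marginal probability $0$. Then $\mathcal D_1\in\mathsf{CQ}(\mathsf{TI})$.
   Context: Fix a countably infinite universe $U$ equipped with a linear order $<$. Facts are $R(u_1,\dots,u_{\mathrm{ar}(R)})$ with $R$ from a finite schema and $u_i\in U$; instances are finite sets of facts; $\mathrm{adom}(D)$ is the set of elements of $U$ occurring in $D$. A probabilistic database (PDB) is a discrete probability space $(\mathbb D,P)$ with $\mathbb D$ a nonempty countable set of instances; its possible worlds are the instances of positive probability. A graph database is an instance over a single binary relation $E$; it is simple if it has no fact $E(a,a)$ and undirected if $E(a,b)\in D$ implies $E(b,a)\in D$. An edge-independent unbounded probabilistic graph is a PDB $\mathcal D$ such that: every possible world is a simple undirected graph database; for every sequence of pairwise distinct two-element subsets $\{a_1,b_1\},\dots,\{a_k,b_k\}$ of $U$, the events $E(a_i,b_i)\in D$ are independent; and for every $n$ there is a possible world with more than $n$ facts. Such a PDB is determined by the marginals $p_{a,b}=\Pr(E(a,b)\in D)$. A PDB $\mathcal I$ is tuple-independent ($\mathsf{TI}$) if for all pairwise distinct facts $f_1,\dots,f_k$, $\Pr(f_1\in I,\dots,f_k\in I)=\prod_i\Pr(f_i\in I)$. A conjunctive query is a formula built from relational atoms $R(\bar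 u)$ ($\bar u$ variables or constants) and equality atoms using only $\exists,\wedge$, evaluated under active domain semantics; a CQ-view consists of one CQ $\Phi_R(x_1,\dots,x_{\mathrm{ar}(R)})$ per output relation $R$, mapping $D$ to the instance of all $R(\bar a)$ with $\bar a$ over $\mathrm{adom}(D)\cup\mathrm{adom}(\Phi_R)$ and $D\models\Phi_R[\bar a]$. The image of a PDB under a view is the push-forward distribution; $\mathsf{CQ}(\mathsf{TI})$ is the class of images of TI-PDBs under CQ-views. *)

theory Defs
  imports "HOL-Probability.Probability" "HOL-Library.Countable" "HOL-Library.Infinite_Typeclass"
begin

text \<open>A fact R(u_1,...,u_k) is represented as a pair (R, [u_1,...,u_k]) with relation
  names drawn from nat.\<close>

type_synonym 'u fact = "nat \<times> 'u list"
type_synonym 'u inst = "'u fact set"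

definition is_instance :: "nat set \<Rightarrow> (nat \<Rightarrow> nat) \<Rightarrow> 'u inst \<Rightarrow> bool" where
  "is_instance S ar I \<longleftrightarrow> finite I \<and> (\<forall>(R, us) \<in> I. R \<in> S \<and> length us = ar R)"

definition adom :: "'u inst \<Rightarrow> 'u set" where
  "adom I = (\<Union>f\<in>I. set (snd f))"

definition is_PDB :: "nat set \<Rightarrow> (nat \<Rightarrow> nat) \<Rightarrow> 'u inst pmf \<Rightarrow> bool" where
  "is_PDB S ar P \<longleftrightarrow> finite S \<and> (\<forall>I \<in> set_pmf P. is_instance S ar I)"

definition tuple_independent :: "'u inst pmf \<Rightarrow> bool" where
  "tuple_independent P \<longleftrightarrow>
     (\<forall>F. finite F \<longrightarrow>
        measure_pmf.prob P {I. F \<subseteq> I} = (\<Prod>f\<in>F. measure_pmf.prob P {I. f \<in> I}))"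

datatype 'u cq_term = CVar nat | CConst 'u

datatype 'u cq =
    RelAtom nat "'u cq_term list"
  | EqAtom "'u cq_term" "'u cq_term"
  | Conj "'u cq" "'u cq"
  | Exists nat "'u cq"

fun term_vars :: "'u cq_term \<Rightarrow> nat set" where
  "term_vars (CVar x) = {x}"
| "term_vars (CConst c) = {}"

fun term_consts :: "'u cq_term \<Rightarrow> 'u set" where
  "term_consts (CVar x) = {}"
| "term_consts (CConst c) = {c}"

fun term_eval :: "(nat \<Rightarrow> 'u) \<Rightarrow> 'u cq_term \<Rightarrow> 'u" where
  "term_eval \<nu> (CVar x) = \<nu> x"
| "term_eval \<nu> (CConst c) = c"

fun cq_fv :: "'u cq \<Rightarrow> nat set" where
  "cq_fv (RelAtom R ts) = (\<Union>t\<in>set ts. term_vars t)"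
| "cq_fv (EqAtom s t) = term_vars s \<union> term_vars t"
| "cq_fv (Conj \<phi> \<psi>) = cq_fv \<phi> \<union> cq_fv \<psi>"
| "cq_fv (Exists x \<phi>) = cq_fv \<phi> - {x}"

fun cq_consts :: "'u cq \<Rightarrow> 'u set" where
  "cq_consts (RelAtom R ts) = (\<Union>t\<in>set ts. term_consts t)"
| "cq_consts (EqAtom s t) = term_consts s \<union> term_consts t"
| "cq_consts (Conj \<phi> \<psi>) = cq_consts \<phi> \<union> cq_consts \<psi>"
| "cq_consts (Exists x \<phi>) = cq_consts \<phi>"

fun cq_holds :: "'u inst \<Rightarrow> 'u set \<Rightarrow> (nat \<Rightarrow> 'u) \<Rightarrow> 'u cq \<Rightarrow> bool" where
  "cq_holds D Dom \<nu> (RelAtom R ts) \<longleftrightarrow> (R, map (term_eval \<nu>) ts) \<in> D"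
| "cq_holds D Dom \<nu> (EqAtom s t) \<longleftrightarrow> term_eval \<nu> s = term_eval \<nu> t"
| "cq_holds D Dom \<nu> (Conj \<phi> \<psi>) \<longleftrightarrow> cq_holds D Dom \<nu> \<phi> \<and> cq_holds D Dom \<nu> \<psi>"
| "cq_holds D Dom \<nu> (Exists x \<phi>) \<longleftrightarrow> (\<exists>a\<in>Dom. cq_holds D Dom (\<nu>(x := a)) \<phi>)"

text \<open>A CQ Phi(x_1,...,x_k): a formula together with the distinct list of its
  free (output) variables.\<close>
definition wf_cq :: "'u cq \<Rightarrow> nat list \<Rightarrow> bool" where
  "wf_cq \<phi> xs \<longleftrightarrow> distinct xs \<and> cq_fv \<phi> \<subseteq> set xs"

definition cq_answers :: "'u cq \<Rightarrow> nat list \<Rightarrow> 'u inst \<Rightarrow> 'u list set" where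
  "cq_answers \<phi> xs D =
     {us. length us = length xs \<and> set us \<subseteq> adom D \<union> cq_consts \<phi> \<and>
          cq_holds D (adom D \<union> cq_consts \<phi>)
            (\<lambda>x. case map_of (zip xs us) x of Some u \<Rightarrow> u | None \<Rightarrow> undefined) \<phi>}"

text \<open>A graph database (instance over the single binary relation E) is represented by the set
  of pairs (a,b) with E(a,b) in the instance.\<close>

definition graph_view :: "'u cq \<Rightarrow> nat list \<Rightarrow> 'u inst \<Rightarrow> ('u \<times> 'u) set" where
  "graph_view \<phi> xs D = {(u, v). [u, v] \<in> cq_answers \<phi> xs D}"

definition in_CQ_TI_graph :: "('u \<times> 'u) set pmf \<Rightarrow> bool" where
  "in_CQ_TI_graph Q \<longleftrightarrow>
     (\<exists>S ar (P :: 'u inst pmf) \<phi> xs.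
        is_PDB S ar P \<and> tuple_independent P \<and> wf_cq \<phi> xs \<and> length xs = 2 \<and>
        map_pmf (graph_view \<phi> xs) P = Q)"

definition edge_indep_unbounded_graph :: "('u \<times> 'u) set pmf \<Rightarrow> bool" where
  "edge_indep_unbounded_graph Q \<longleftrightarrow>
     (\<forall>D\<in>set_pmf Q. finite D \<and> (\<forall>a. (a, a) \<notin> D) \<and> (\<forall>a b. (a, b) \<in> D \<longrightarrow> (b, a) \<in> D)) \<and>
     (\<forall>F. finite F \<longrightarrow> (\<forall>(a, b)\<in>F. a \<noteq> b) \<longrightarrow> inj_on (\<lambda>(a, b). {a, b}) F \<longrightarrow>
        measure_pmf.prob Q {D. F \<subseteq> D} = (\<Prod>e\<in>F. measure_pmf.prob Q {D. e \<in> D})) \<and>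
     (\<forall>n::nat. \<exists>D\<in>set_pmf Q. card D > n)"

end

theory Submission
  imports Defs
begin


lemma ti_exists:
  fixes r :: "nat \<Rightarrow> real"
  assumes r0: "\<And>n. 0 \<le> r n" and r1: "\<And>n. r n \<le> 1" and sr: "summable r"
  shows "\<exists>P::nat set pmf. (\<forall>S\<in>set_pmf P. finite S) \<and>
     (\<forall>F. finite F \<longrightarrow> measure_pmf.prob P {S. F \<subseteq> S} = (\<Prod>n\<in>F. r n))"
proof -
  define Mi where "Mi = (\<lambda>n. measure_pmf (bernoulli_pmf (r n)))"
  define M where "M = PiM UNIV Mi"
  interpret product_prob_space Mi UNIV
    unfolding Mi_def product_prob_space_def product_sigma_finite_def product_prob_space_axioms_def
    by (auto intro: measure_pmf.prob_space_axioms measure_pmf.sigma_finite_measure_axioms)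
  interpret Mp: prob_space M unfolding M_def by (rule P.prob_space_axioms)
  have sp: "space M = UNIV" unfolding M_def by (simp add: space_PiM Mi_def)
  have measC: "{\<omega> \<in> space M. Q (\<omega> n)} \<in> sets M" for Q n
    unfolding M_def by (rule sets_Collect_single') (auto simp: Mi_def)
  have meas1[measurable]: "{\<omega> \<in> space M. \<omega> n} \<in> sets M" for n
    using measC[of "\<lambda>x. x"] by simp
  have m1: "measure M {\<omega> \<in> space M. \<omega> n} = r n" for n
  proof -
    have "emeasure M {\<omega> \<in> space M. \<omega> n \<in> {True}} = emeasure (Mi n) {True}"
      unfolding M_def by (rule emeasure_PiM_Collect_single) (auto simp: Mi_def)
    also have "\<dots> = r n" using r0 r1 by (simp add: Mi_def emeasure_pmf_single)
    finally show ?thesis by (simp add: Mp.emeasure_eq_measure r0)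
  qed
  have "AE \<omega> in M. eventually (\<lambda>n. \<omega> \<in> space M - {\<omega> \<in> space M. \<omega> n}) sequentially"
    by (rule borel_cantelli_AE1) (auto simp: m1 sr Mp.emeasure_eq_measure)
  then have finAE: "AE \<omega> in M. finite {n. \<omega> n}"
  proof (rule AE_mp, intro AE_I2 impI)
    fix \<omega> assume "eventually (\<lambda>n. \<omega> \<in> space M - {\<omega> \<in> space M. \<omega> n}) sequentially"
    then obtain N where "\<forall>n\<ge>N. \<not> \<omega> n" by (auto simp: eventually_sequentially)
    then have "{n. \<omega> n} \<subseteq> {..<N}" using not_le by blast
    then show "finite {n. \<omega> n}" using finite_subset by blast
  qed
  have measS[measurable]: "{\<omega> \<in> space M. {n. \<omega> n} = S} \<in> sets M" for S
  proof -
    have "{\<omega> \<in> space M. {n. \<omega> n} = S} = (\<Inter>n. {\<omega> \<in> space M. \<omega> n = (n \<in> S)})"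
      using sp by auto
    also have "\<dots> \<in> sets M" using measC sp by auto
    finally show ?thesis .
  qed
  have measF[measurable]: "{\<omega> \<in> space M. finite {n. \<omega> n} \<and> {n. \<omega> n} \<in> A} \<in> sets M" for A
  proof -
    have "{\<omega> \<in> space M. finite {n. \<omega> n} \<and> {n. \<omega> n} \<in> A} =
       (\<Union>S\<in>Collect finite \<inter> A. {\<omega> \<in> space M. {n. \<omega> n} = S})" by auto
    also have "\<dots> \<in> sets M"
      by (intro sets.countable_UN'') (auto intro: countable_Int1 countable_Collect_finite)
    finally show ?thesis .
  qed
  define f where "f S = (if finite S then measure M {\<omega> \<in> space M. {n. \<omega> n} = S} else 0)" for S
  have f0: "f S \<ge> 0" for S by (simp add: f_def)
  have key: "(\<integral>\<^sup>+ S. ennreal (f S) * indicator A S \<partial>count_space UNIV) =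
      emeasure M {\<omega> \<in> space M. finite {n. \<omega> n} \<and> {n. \<omega> n} \<in> A}" for A
  proof -
    have "{\<omega> \<in> space M. finite {n. \<omega> n} \<and> {n. \<omega> n} \<in> A} =
       (\<Union>S\<in>Collect finite \<inter> A. {\<omega> \<in> space M. {n. \<omega> n} = S})" (is "_ = ?U") by auto
    have "emeasure M {\<omega> \<in> space M. finite {n. \<omega> n} \<and> {n. \<omega> n} \<in> A} =
       (\<integral>\<^sup>+S. emeasure M {\<omega> \<in> space M. {n. \<omega> n} = S} \<partial>count_space (Collect finite \<inter> A))"
      unfolding \<open>_ = ?U\<close>
    proof (rule emeasure_UN_countable)
      show "countable (Collect finite \<inter> A)" by (intro countable_Int1 countable_Collect_finite)
      show "disjoint_family_on (\<lambda>S. {\<omega> \<in> space M. {n. \<omega> n} = S}) (Collect finite \<inter> A)"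
        unfolding disjoint_family_on_def by blast
    qed (rule measS)
    also have "\<dots> = (\<integral>\<^sup>+S. emeasure M {\<omega> \<in> space M. {n. \<omega> n} = S} * indicator (Collect finite \<inter> A) S \<partial>count_space UNIV)"
      by (rule nn_integral_count_space_indicator) simp
    also have "\<dots> = (\<integral>\<^sup>+ S. ennreal (f S) * indicator A S \<partial>count_space UNIV)"
      by (intro nn_integral_cong) (auto simp: f_def Mp.emeasure_eq_measure indicator_def)
    finally show ?thesis by simp
  qed
  have tot: "(\<integral>\<^sup>+ S. ennreal (f S) \<partial>count_space UNIV) = 1"
  proof -
    have "(\<integral>\<^sup>+ S. ennreal (f S) \<partial>count_space UNIV) = 
        emeasure M {\<omega> \<in> space M. finite {n. \<omega> n} \<and> {n. \<omega> n} \<in> UNIV}"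
      using key[of UNIV] by simp
    also have "\<dots> = 1"
      by (rule Mp.emeasure_eq_1_AE[OF measF]) (use finAE sp in auto)
    finally show ?thesis .
  qed
  define P where "P = embed_pmf f"
  have pmfP: "pmf P S = f S" for S unfolding P_def by (rule pmf_embed_pmf[OF f0 tot])
  have emP: "emeasure (measure_pmf P) A = emeasure M {\<omega> \<in> space M. finite {n. \<omega> n} \<and> {n. \<omega> n} \<in> A}" for A
  proof -
    have "emeasure (measure_pmf P) A = (\<integral>\<^sup>+ x. indicator A x \<partial>measure_pmf P)" by simp
    also have "\<dots> = (\<integral>\<^sup>+ S. ennreal (f S) * indicator A S \<partial>count_space UNIV)"
      by (simp add: nn_integral_measure_pmf pmfP)
    finally show ?thesis using key by simp
  qed
  have prP: "measure_pmf.prob P A = measure M {\<omega> \<in> space M. finite {n. \<omega> n} \<and> {n. \<omega> n} \<in> A}" for A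
    using emP[of A] by (simp add: measure_pmf.emeasure_eq_measure Mp.emeasure_eq_measure)
  show ?thesis
  proof (intro exI[of _ P] conjI allI impI ballI)
    fix S assume "S \<in> set_pmf P"
    then have "f S \<noteq> 0" by (simp add: set_pmf_iff pmfP)
    then show "finite S" by (auto simp: f_def split: if_splits)
  next
    fix F :: "nat set" assume fF: "finite F"
    have "measure_pmf.prob P {S. F \<subseteq> S} = measure M {\<omega> \<in> space M. finite {n. \<omega> n} \<and> {n. \<omega> n} \<in> {S. F \<subseteq> S}}"
      by (rule prP)
    also have "\<dots> = measure M {\<omega> \<in> space M. \<forall>n\<in>F. \<omega> n \<in> {True}}"
    proof (rule measure_eq_AE)
      show "AE x in M. (x \<in> {\<omega> \<in> space M. finite {n. \<omega> n} \<and> {n. \<omega> n} \<in> {S. F \<subseteq> S}}) =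
          (x \<in> {\<omega> \<in> space M. \<forall>n\<in>F. \<omega> n \<in> {True}})"
        using finAE by eventually_elim (auto simp: sp)
      show "{\<omega> \<in> space M. \<forall>n\<in>F. \<omega> n \<in> {True}} \<in> sets M"
        using fF by (intro sets.sets_Collect_finite_All) (auto intro: measC)
    qed (rule measF)
    also have "\<dots> = (\<Prod>n\<in>F. r n)"
    proof -
      have "emeasure M {\<omega> \<in> space M. \<forall>n\<in>F. \<omega> n \<in> {True}} = (\<Prod>n\<in>F. emeasure (Mi n) {True})"
        unfolding M_def by (rule emeasure_PiM_Collect) (auto simp: fF Mi_def)
      also have "\<dots> = (\<Prod>n\<in>F. ennreal (r n))"
        using r0 r1 by (simp add: Mi_def emeasure_pmf_single)
      also have "\<dots> = ennreal (\<Prod>n\<in>F. r n)" by (simp add: prod_ennreal r0)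
      finally show ?thesis by (simp add: Mp.emeasure_eq_measure prod_nonneg r0)
    qed
    finally show "measure_pmf.prob P {S. F \<subseteq> S} = (\<Prod>n\<in>F. r n)" .
  qed
qed


lemma pmf_set_eqI:
  fixes P Q :: "'a::countable set pmf"
  assumes eq: "\<And>F. finite F \<Longrightarrow> measure_pmf.prob P {S. F \<subseteq> S} = measure_pmf.prob Q {S. F \<subseteq> S}"
  shows "P = Q"
proof -
  have step: "measure_pmf.prob P {S. A \<subseteq> S \<and> B \<inter> S = {}} = measure_pmf.prob Q {S. A \<subseteq> S \<and> B \<inter> S = {}}"
    if "finite B" "finite A" for A B
    using that
  proof (induction B arbitrary: A rule: finite_induct)
    case empty
    then show ?case using eq by simp
  next
    case (insert x B)
    show ?case
    proof (cases "x \<in> A")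
      case True
      then have e: "{S. A \<subseteq> S \<and> insert x B \<inter> S = {}} = {}" by auto
      show ?thesis unfolding e by simp
    next
      case False
      have d: "{S. A \<subseteq> S \<and> insert x B \<inter> S = {}} =
         {S. A \<subseteq> S \<and> B \<inter> S = {}} - {S. insert x A \<subseteq> S \<and> B \<inter> S = {}}" by auto
      have s: "{S. insert x A \<subseteq> S \<and> B \<inter> S = {}} \<subseteq> {S. A \<subseteq> S \<and> B \<inter> S = {}}" by auto
      have "measure_pmf.prob P ({S. A \<subseteq> S \<and> B \<inter> S = {}} - {S. insert x A \<subseteq> S \<and> B \<inter> S = {}}) =
         measure_pmf.prob P {S. A \<subseteq> S \<and> B \<inter> S = {}} - measure_pmf.prob P {S. insert x A \<subseteq> S \<and> B \<inter> S = {}}"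
        by (rule measure_pmf.finite_measure_Diff[OF _ _ s]) auto
      moreover have "measure_pmf.prob Q ({S. A \<subseteq> S \<and> B \<inter> S = {}} - {S. insert x A \<subseteq> S \<and> B \<inter> S = {}}) =
         measure_pmf.prob Q {S. A \<subseteq> S \<and> B \<inter> S = {}} - measure_pmf.prob Q {S. insert x A \<subseteq> S \<and> B \<inter> S = {}}"
        by (rule measure_pmf.finite_measure_Diff[OF _ _ s]) auto
      moreover have "finite (insert x A)" using insert.prems by simp
      moreover note IH1 = insert.IH[of A, OF insert.prems]
      moreover note IH2 = insert.IH[of "insert x A", OF \<open>finite (insert x A)\<close>]
      ultimately show ?thesis unfolding d by simp
    qed
  qed
  show ?thesis
  proof (rule pmf_eqI)
    fix D0 :: "'a set"
    define K where "K n = {x::'a. to_nat x < n}" for n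
    have finK: "finite (K n)" for n
    proof -
      have "K n = to_nat -` {..<n}" by (auto simp: K_def)
      then show ?thesis by (simp add: finite_vimageI)
    qed
    define E where "E n = {S. D0 \<inter> K n \<subseteq> S \<and> (K n - D0) \<inter> S = {}}" for n
    have dec: "decseq E" unfolding decseq_def E_def K_def by (auto 0 3 dest: order.strict_trans2)
    have inter: "(\<Inter>n. E n) = {D0}"
    proof (intro equalityI subsetI)
      fix S assume "S \<in> (\<Inter>n. E n)"
      then have "\<forall>n. D0 \<inter> K n \<subseteq> S \<and> (K n - D0) \<inter> S = {}" by (auto simp: E_def)
      then have "x \<in> S \<longleftrightarrow> x \<in> D0" for x
        using spec[of _ "Suc (to_nat x)"] by (auto simp: K_def)
      then show "S \<in> {D0}" by auto
    qed (auto simp: E_def)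
    have "(\<lambda>n. measure_pmf.prob P (E n)) \<longlonglongrightarrow> measure_pmf.prob P (\<Inter>n. E n)"
      by (rule measure_pmf.finite_Lim_measure_decseq) (auto simp: dec)
    moreover have "(\<lambda>n. measure_pmf.prob P (E n)) = (\<lambda>n. measure_pmf.prob Q (E n))"
      unfolding E_def using step finK by auto
    moreover have "(\<lambda>n. measure_pmf.prob Q (E n)) \<longlonglongrightarrow> measure_pmf.prob Q (\<Inter>n. E n)"
      by (rule measure_pmf.finite_Lim_measure_decseq) (auto simp: dec)
    ultimately have "measure_pmf.prob P {D0} = measure_pmf.prob Q {D0}"
      using LIMSEQ_unique inter by metis
    then show "pmf P D0 = pmf Q D0" by (simp add: measure_pmf_single)
  qed
qed



definition phi0 :: "'u cq" where
  "phi0 = Conj (RelAtom 0 [CVar 0, CVar 1]) (RelAtom 0 [CVar 1, CVar 0])"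

lemma graph_view_phi0:
  "graph_view phi0 [0, 1] D = {(u, v). (0, [u, v]) \<in> D \<and> (0, [v, u]) \<in> D}"
proof -
  have "(0::nat, [u, v]) \<in> D \<Longrightarrow> u \<in> adom D \<and> v \<in> adom D" for u v
    unfolding adom_def by force
  then show ?thesis
    unfolding graph_view_def cq_answers_def phi0_def by auto
qed

lemma wf_phi0: "wf_cq phi0 [0, 1]"
  by (auto simp: wf_cq_def phi0_def)

lemma summable_r: "summable (\<lambda>n::nat. 1 / (real (n div 2 + 1))^2)"
proof (rule summable_comparison_test')
  have "summable (\<lambda>n. inverse (real n ^ 2))" by (rule inverse_power_summable) simp
  then have "summable (\<lambda>n. inverse (real (Suc n) ^ 2))"
    by (subst summable_Suc_iff)
  then show "summable (\<lambda>n. 4 * inverse (real (Suc n) ^ 2))" by (rule summable_mult)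
  fix n :: nat assume "n \<ge> 0"
  have "Suc n \<le> 2 * (n div 2 + 1)" by presburger
  then have h: "real (Suc n) \<le> 2 * real (n div 2 + 1)" by (metis of_nat_le_iff of_nat_mult of_nat_numeral)
  have "real (Suc n) ^ 2 \<le> (2 * real (n div 2 + 1)) ^ 2"
    by (rule power_mono[OF h]) simp
  also have "\<dots> = 4 * real (n div 2 + 1) ^ 2" by (subst power_mult_distrib) simp
  finally have "real (Suc n) ^ 2 \<le> 4 * real (n div 2 + 1) ^ 2" .
  moreover have "real (Suc n) ^ 2 > 0" by simp
  ultimately have "inverse (4 * real (n div 2 + 1) ^ 2) \<le> inverse (real (Suc n) ^ 2)"
    by (rule le_imp_inverse_le)
  then show "norm (1 / (real (n div 2 + 1))^2) \<le> 4 * inverse (real (Suc n) ^ 2)"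
    by (simp add: inverse_eq_divide)
qed


theorem lemma7p12:
  fixes a b :: "nat \<Rightarrow> 'u :: {countable, infinite, linorder}"
    and D1 :: "('u \<times> 'u) set pmf"
  assumes two: "\<And>i. i > 0 \<Longrightarrow> a i \<noteq> b i"
    and distinct_pairs: "inj_on (\<lambda>i. {a i, b i}) {i. i > 0}"
    and eiu: "edge_indep_unbounded_graph D1"
    and marg_ab: "\<And>i. i > 0 \<Longrightarrow> measure_pmf.prob D1 {D. (a i, b i) \<in> D} = 1 / real i ^ 4"
    and marg_ba: "\<And>i. i > 0 \<Longrightarrow> measure_pmf.prob D1 {D. (b i, a i) \<in> D} = 1 / real i ^ 4"
    and marg_other: "\<And>x y. (\<forall>i>0. {x, y} \<noteq> {a i, b i}) \<Longrightarrow> measure_pmf.prob D1 {D. (x, y) \<in> D} = 0"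
  shows "in_CQ_TI_graph D1"
proof -
  note E = eiu[unfolded edge_indep_unbounded_graph_def]
  have symD1: "\<And>D x y. D \<in> set_pmf D1 \<Longrightarrow> (x, y) \<in> D \<Longrightarrow> (y, x) \<in> D"
    using conjunct1[OF E] by blast
  have indD1: "\<And>F. finite F \<Longrightarrow> (\<forall>(x, y)\<in>F. x \<noteq> y) \<Longrightarrow> inj_on (\<lambda>(x, y). {x, y}) F \<Longrightarrow>
        measure_pmf.prob D1 {D. F \<subseteq> D} = (\<Prod>e\<in>F. measure_pmf.prob D1 {D. e \<in> D})"
    using conjunct1[OF conjunct2[OF E]] by blast
  have pair_eq: "i = j" if "i > 0" "j > 0" "{a i, b i} = {a j, b j}" for i j
    using distinct_pairs that unfolding inj_on_def by blast
  define r where "r n = 1 / (real (n div 2 + 1))^2" for n :: nat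
  have r0: "0 \<le> r n" for n by (simp add: r_def)
  have r1: "r n \<le> 1" for n by (simp add: r_def)
  have sr: "summable r" unfolding r_def by (rule summable_r)
  obtain P0 :: "nat set pmf" where P0fin: "\<forall>S\<in>set_pmf P0. finite S"
    and P0ti: "\<forall>F. finite F \<longrightarrow> measure_pmf.prob P0 {S. F \<subseteq> S} = (\<Prod>n\<in>F. r n)"
    using ti_exists[OF r0 r1 sr] by blast
  define g where "g n = (0::nat, if even n then [a (n div 2 + 1), b (n div 2 + 1)]
                                  else [b (n div 2 + 1), a (n div 2 + 1)])" for n
  have g0: "g (2 * i - 2) = (0, [a i, b i])" if "i > 0" for i
  proof -
    have "(2 * i - 2) div 2 + 1 = i" "even (2 * i - 2)" using that by presburger+
    then show ?thesis by (simp add: g_def)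
  qed
  have g1: "g (2 * i - 1) = (0, [b i, a i])" if "i > 0" for i
  proof -
    have "(2 * i - 1) div 2 + 1 = i" "odd (2 * i - 1)" using that by presburger+
    then show ?thesis by (simp add: g_def)
  qed
  have g_cases: "\<exists>i>0. (n = 2 * i - 2 \<and> u = a i \<and> v = b i) \<or> (n = 2 * i - 1 \<and> u = b i \<and> v = a i)"
    if "g n = (0, [u, v])" for n u v
  proof (cases "even n")
    case True
    then have "n = 2 * (n div 2 + 1) - 2" by presburger
    then show ?thesis using that True by (intro exI[of _ "n div 2 + 1"]) (auto simp: g_def)
  next
    case False
    then have "n = 2 * (n div 2 + 1) - 1" by presburger
    then show ?thesis using that False by (intro exI[of _ "n div 2 + 1"]) (auto simp: g_def)
  qed
  have g_form: "\<exists>u v. g n = (0, [u, v])" for n by (simp add: g_def)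
  have inj_g: "inj g"
  proof (rule injI)
    fix n m assume eq: "g n = g m"
    obtain u v where uv: "g n = (0, [u, v])" using g_form by blast
    obtain i where i: "i > 0" "(n = 2 * i - 2 \<and> u = a i \<and> v = b i) \<or> (n = 2 * i - 1 \<and> u = b i \<and> v = a i)"
      using g_cases[OF uv] by blast
    obtain j where j: "j > 0" "(m = 2 * j - 2 \<and> u = a j \<and> v = b j) \<or> (m = 2 * j - 1 \<and> u = b j \<and> v = a j)"
      using g_cases[of m u v] uv eq by metis
    have "{a i, b i} = {a j, b j}" using i j by auto
    then have "i = j" using pair_eq i j by blast
    then show "n = m" using i j two[of i] by auto
  qed
  define P where "P = map_pmf (image g) P0"
  have PDB: "is_PDB {0} (\<lambda>_. 2) P"
  proof -
    have "finite I \<and> (\<forall>(R, us)\<in>I. R \<in> {0} \<and> length us = 2)" if I: "I \<in> set_pmf P" for I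
    proof -
      obtain S where S: "S \<in> set_pmf P0" "I = g ` S" using I unfolding P_def by auto
      show ?thesis using S P0fin by (auto simp: g_def)
    qed
    then show ?thesis unfolding is_PDB_def is_instance_def by simp
  qed
  have P0single: "measure_pmf.prob P0 {S. n \<in> S} = r n" for n
  proof -
    have e: "{S. n \<in> S} = {S. {n} \<subseteq> S}" by auto
    show ?thesis unfolding e using P0ti[rule_format, of "{n}"] by simp
  qed
  have TI: "tuple_independent P"
    unfolding tuple_independent_def
  proof (intro allI impI)
    fix F :: "(nat \<times> 'u list) set" assume fF: "finite F"
    show "measure_pmf.prob P {I. F \<subseteq> I} = (\<Prod>f\<in>F. measure_pmf.prob P {I. f \<in> I})"
    proof (cases "F \<subseteq> range g")
      case True
      have fv: "finite (g -` F)" using fF inj_g by (simp add: finite_vimageI)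
      have "measure_pmf.prob P {I. F \<subseteq> I} = measure_pmf.prob P0 {S. g -` F \<subseteq> S}"
      proof -
        have "F \<subseteq> g ` S \<longleftrightarrow> g -` F \<subseteq> S" for S
        proof
          assume "F \<subseteq> g ` S"
          then show "g -` F \<subseteq> S" using inj_g by (metis image_iff inj_image_mem_iff subsetD subsetI vimageE)
        next
          assume "g -` F \<subseteq> S"
          then show "F \<subseteq> g ` S" using True by blast
        qed
        then have "image g -` {I. F \<subseteq> I} = {S. g -` F \<subseteq> S}" by auto
        then show ?thesis by (simp add: P_def)
      qed
      also have "\<dots> = (\<Prod>n\<in>g -` F. r n)" using P0ti fv by blast
      also have "\<dots> = (\<Prod>n\<in>g -` F. measure_pmf.prob P {I. g n \<in> I})"
      proof (rule prod.cong[OF refl])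
        fix n
        have "image g -` {I. g n \<in> I} = {S. n \<in> S}"
          using inj_g by (auto simp: inj_def)
        then show "r n = measure_pmf.prob P {I. g n \<in> I}" by (simp add: P_def P0single)
      qed
      also have "\<dots> = (\<Prod>f\<in>g ` (g -` F). measure_pmf.prob P {I. f \<in> I})"
        using prod.reindex[OF inj_on_subset[OF inj_g subset_UNIV, of "g -` F"], of "\<lambda>f. measure_pmf.prob P {I. f \<in> I}"]
        by (simp only: o_def)
      also have "g ` (g -` F) = F" using True by auto
      finally show ?thesis .
    next
      case False
      then obtain f where f: "f \<in> F" "f \<notin> range g" by auto
      have e1: "image g -` {I. F \<subseteq> I} = {}" using f by auto
      have e2: "image g -` {I. f \<in> I} = {}" using f by auto
      have "measure_pmf.prob P {I. F \<subseteq> I} = 0" unfolding P_def measure_map_pmf e1 by simp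
      moreover have "measure_pmf.prob P {I. f \<in> I} = 0" unfolding P_def measure_map_pmf e2 by simp
      then have "(\<Prod>f\<in>F. measure_pmf.prob P {I. f \<in> I}) = 0"
        using f(1) fF by (simp add: prod_zero_iff) blast
      ultimately show ?thesis by simp
    qed
  qed
  define V where "V S = {(u, v). (0::nat, [u, v]) \<in> g ` S \<and> (0::nat, [v, u]) \<in> g ` S}" for S
  have charV: "(u, v) \<in> V S \<longleftrightarrow> (\<exists>i>0. 2 * i - 2 \<in> S \<and> 2 * i - 1 \<in> S \<and>
                   ((u, v) = (a i, b i) \<or> (u, v) = (b i, a i)))" for u v S
  proof
    assume "(u, v) \<in> V S"
    then obtain n m where nm: "n \<in> S" "g n = (0, [u, v])" "m \<in> S" "g m = (0, [v, u])"
      unfolding V_def by (auto simp: image_iff)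
    obtain i where i: "i > 0" "(n = 2 * i - 2 \<and> u = a i \<and> v = b i) \<or> (n = 2 * i - 1 \<and> u = b i \<and> v = a i)"
      using g_cases[OF nm(2)] by blast
    obtain j where j: "j > 0" "(m = 2 * j - 2 \<and> v = a j \<and> u = b j) \<or> (m = 2 * j - 1 \<and> v = b j \<and> u = a j)"
      using g_cases[OF nm(4)] by blast
    have "{a i, b i} = {a j, b j}" using i j by auto
    then have "i = j" using pair_eq i j by blast
    then show "\<exists>i>0. 2 * i - 2 \<in> S \<and> 2 * i - 1 \<in> S \<and> ((u, v) = (a i, b i) \<or> (u, v) = (b i, a i))"
      using i j nm two[of i] by (intro exI[of _ i]) auto
  next
    assume "\<exists>i>0. 2 * i - 2 \<in> S \<and> 2 * i - 1 \<in> S \<and> ((u, v) = (a i, b i) \<or> (u, v) = (b i, a i))"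
    then obtain i where i: "i > 0" "2 * i - 2 \<in> S" "2 * i - 1 \<in> S" "(u, v) = (a i, b i) \<or> (u, v) = (b i, a i)"
      by blast
    have "(0, [a i, b i]) \<in> g ` S" "(0, [b i, a i]) \<in> g ` S"
      using g0[OF i(1)] g1[OF i(1)] i(2,3) by (metis imageI)+
    then show "(u, v) \<in> V S" using i(4) unfolding V_def by auto
  qed
  have mapV: "map_pmf (graph_view phi0 [0, 1]) P = map_pmf V P0"
    unfolding P_def map_pmf_comp graph_view_phi0 V_def by (rule refl)
  have eqD: "map_pmf V P0 = D1"
  proof (rule pmf_set_eqI)
    fix F :: "('u \<times> 'u) set" assume fF: "finite F"
    have lhs: "measure_pmf.prob (map_pmf V P0) {G. F \<subseteq> G} = measure_pmf.prob P0 {S. F \<subseteq> V S}"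
      by simp
    show "measure_pmf.prob (map_pmf V P0) {G. F \<subseteq> G} = measure_pmf.prob D1 {G. F \<subseteq> G}"
    proof (cases "\<forall>p\<in>F. \<exists>i>0. p = (a i, b i) \<or> p = (b i, a i)")
      case good: True
      define I where "I = {i. i > 0 \<and> ((a i, b i) \<in> F \<or> (b i, a i) \<in> F)}"
      define h where "h i = (if (a i, b i) \<in> F then (a i, b i) else (b i, a i))" for i
      have finI: "finite I"
      proof (rule inj_on_finite[of h I F])
        show "inj_on h I"
        proof (rule inj_onI)
          fix i j assume ij: "i \<in> I" "j \<in> I" "h i = h j"
          then have "{a i, b i} = {a j, b j}" by (auto simp: h_def split: if_splits)
          then show "i = j" using pair_eq ij(1,2) by (auto simp: I_def)
        qed
        show "h ` I \<subseteq> F" by (auto simp: h_def I_def)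
      qed (rule fF)
      define N where "N = (\<lambda>i. 2 * i - 2) ` I \<union> (\<lambda>i. 2 * i - 1) ` I"
      have finN: "finite N" using finI by (simp add: N_def)
      have setQ: "{S. F \<subseteq> V S} = {S. N \<subseteq> S}"
      proof (intro Collect_cong iffI)
        fix S assume FV: "F \<subseteq> V S"
        show "N \<subseteq> S"
        proof
          fix n assume "n \<in> N"
          then obtain i where i: "i \<in> I" "n = 2 * i - 2 \<or> n = 2 * i - 1" by (auto simp: N_def)
          then obtain u v where p: "(u, v) \<in> F" "(u, v) = (a i, b i) \<or> (u, v) = (b i, a i)"
            by (auto simp: I_def)
          then have "(u, v) \<in> V S" using FV by auto
          then obtain j where j: "j > 0" "2 * j - 2 \<in> S" "2 * j - 1 \<in> S"
              "(u, v) = (a j, b j) \<or> (u, v) = (b j, a j)" using charV by blast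
          have "{a i, b i} = {a j, b j}" using p j by auto
          then have "i = j" using pair_eq i(1) j(1) by (auto simp: I_def)
          then show "n \<in> S" using i j by auto
        qed
      next
        fix S assume NS: "N \<subseteq> S"
        show "F \<subseteq> V S"
        proof
          fix p assume pF: "p \<in> F"
          then obtain i where i: "i > 0" "p = (a i, b i) \<or> p = (b i, a i)" using good by blast
          then have "i \<in> I" using pF by (auto simp: I_def)
          then have "2 * i - 2 \<in> S" "2 * i - 1 \<in> S" using NS by (auto simp: N_def)
          moreover obtain u v where "p = (u, v)" by (cases p)
          ultimately show "p \<in> V S" using i charV by blast
        qed
      qed
      have r_e0: "r (2 * i - 2) = 1 / (real i)^2" if "i > 0" for i
      proof -
        have "(2 * i - 2) div 2 + 1 = i" using that by presburger
        then show ?thesis by (simp add: r_def)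
      qed
      have r_e1: "r (2 * i - 1) = 1 / (real i)^2" if "i > 0" for i
      proof -
        have "(2 * i - 1) div 2 + 1 = i" using that by presburger
        then show ?thesis by (simp add: r_def)
      qed
      have inj0: "inj_on (\<lambda>i. 2 * i - 2) I"
        by (rule inj_onI) (auto simp: I_def)
      have inj1: "inj_on (\<lambda>i. 2 * i - 1) I"
        by (rule inj_onI) (auto simp: I_def)
      have disj: "(\<lambda>i. 2 * i - 2) ` I \<inter> (\<lambda>i. 2 * i - 1) ` I = {}"
      proof -
        have "2 * i - 2 \<noteq> 2 * j - 1" if "i > 0" "j > 0" for i j :: nat using that by presburger
        then show ?thesis by (auto simp: I_def)
      qed
      have "measure_pmf.prob (map_pmf V P0) {G. F \<subseteq> G} = measure_pmf.prob P0 {S. N \<subseteq> S}"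
        using lhs setQ by simp
      also have "\<dots> = (\<Prod>n\<in>N. r n)" using P0ti finN by blast
      also have "\<dots> = (\<Prod>n\<in>(\<lambda>i. 2 * i - 2) ` I. r n) * (\<Prod>n\<in>(\<lambda>i. 2 * i - 1) ` I. r n)"
        unfolding N_def by (rule prod.union_disjoint) (use finI disj in auto)
      also have "\<dots> = (\<Prod>i\<in>I. r (2 * i - 2)) * (\<Prod>i\<in>I. r (2 * i - 1))"
        unfolding prod.reindex[OF inj0] prod.reindex[OF inj1] o_def by (rule refl)
      also have "\<dots> = (\<Prod>i\<in>I. 1 / (real i)^2) * (\<Prod>i\<in>I. 1 / (real i)^2)"
        using r_e0 r_e1 by (simp add: I_def)
      also have "\<dots> = (\<Prod>i\<in>I. 1 / real i ^ 4)"
        unfolding prod.distrib[symmetric] by (rule prod.cong) (simp_all add: power_mult_distrib flip: power_add)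
      finally have L: "measure_pmf.prob (map_pmf V P0) {G. F \<subseteq> G} = (\<Prod>i\<in>I. 1 / real i ^ 4)" .
      define E' where "E' = (\<lambda>i. (a i, b i)) ` I"
      have injE: "inj_on (\<lambda>i. (a i, b i)) I"
        by (rule inj_onI) (use pair_eq in \<open>auto simp: I_def\<close>)
      have "measure_pmf.prob D1 {G. F \<subseteq> G} = measure_pmf.prob D1 {G. E' \<subseteq> G}"
      proof (rule measure_eq_AE)
        show "AE G in D1. (G \<in> {G. F \<subseteq> G}) = (G \<in> {G. E' \<subseteq> G})"
        proof (rule AE_pmfI)
          fix G assume G: "G \<in> set_pmf D1"
          show "(G \<in> {G. F \<subseteq> G}) = (G \<in> {G. E' \<subseteq> G})"
          proof
            assume "G \<in> {G. F \<subseteq> G}"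
            then have FG: "F \<subseteq> G" by simp
            show "G \<in> {G. E' \<subseteq> G}" using FG symD1[OF G] by (auto simp: E'_def I_def)
          next
            assume "G \<in> {G. E' \<subseteq> G}"
            then have EG: "E' \<subseteq> G" by simp
            have "p \<in> G" if pF: "p \<in> F" for p
            proof -
              obtain i where i: "i > 0" "p = (a i, b i) \<or> p = (b i, a i)" using good pF by blast
              then have "i \<in> I" using pF by (auto simp: I_def)
              then have "(a i, b i) \<in> G" using EG by (auto simp: E'_def)
              then show ?thesis using i symD1[OF G] by auto
            qed
            then show "G \<in> {G. F \<subseteq> G}" by auto
          qed
        qed
      qed simp_all
      also have "\<dots> = (\<Prod>e\<in>E'. measure_pmf.prob D1 {G. e \<in> G})"
      proof (rule indD1)
        show "finite E'" using finI by (simp add: E'_def)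
        show "\<forall>(x, y)\<in>E'. x \<noteq> y" using two by (auto simp: E'_def I_def)
        show "inj_on (\<lambda>(x, y). {x, y}) E'"
          by (rule inj_onI) (use pair_eq in \<open>auto simp: E'_def I_def\<close>)
      qed
      also have "\<dots> = (\<Prod>i\<in>I. measure_pmf.prob D1 {G. (a i, b i) \<in> G})"
        unfolding E'_def by (simp add: prod.reindex injE)
      also have "\<dots> = (\<Prod>i\<in>I. 1 / real i ^ 4)"
        by (rule prod.cong) (auto simp: I_def marg_ab)
      finally show ?thesis using L by simp
    next
      case False
      then obtain q where q: "q \<in> F" "\<not> (\<exists>i>0. q = (a i, b i) \<or> q = (b i, a i))"
        by blast
      obtain x y where "q = (x, y)" by (cases q)
      with q have p: "(x, y) \<in> F" "\<forall>i>0. (x, y) \<noteq> (a i, b i) \<and> (x, y) \<noteq> (b i, a i)"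
        by blast+
      have e: "{S. F \<subseteq> V S} = {}"
      proof -
        have "(x, y) \<notin> V S" for S using p(2) charV by blast
        then show ?thesis using p(1) by blast
      qed
      have nz: "\<forall>i>0. {x, y} \<noteq> {a i, b i}" using p(2) by (auto simp: doubleton_eq_iff)
      have "measure_pmf.prob D1 {G. F \<subseteq> G} \<le> measure_pmf.prob D1 {G. (x, y) \<in> G}"
        by (rule measure_pmf.finite_measure_mono) (use p in auto)
      also have "\<dots> = 0" using marg_other[OF nz] .
      finally have "measure_pmf.prob D1 {G. F \<subseteq> G} = 0" by (simp add: measure_nonneg antisym)
      then show ?thesis using lhs e by simp
    qed
  qed
  show ?thesis
    unfolding in_CQ_TI_graph_def
    using PDB TI wf_phi0 mapV eqD by (intro exI[of _ "{0}"] exI[of _ "\<lambda>_. 2"] exI[of _ P] exI[of _ phi0] exI[of _ "[0, 1]"]) simp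
qed

end
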